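(* The set $\mathcal{PES}(\mathbb C)$ of perfectly everywhere surjective functions $\mathbb C\to\mathbb C$ is strongly $2^{\mathfrak{c}}$-algebrable in the algebra $\mathbb C^{\mathbb C}$.
   Context: $\mathfrak{c}$ denotes the cardinality of $\mathbb R$. A perfect subset of $\mathbb C$ is a nonempty closed set with no isolated points. A function $f:\mathbb C\to\mathbb C$ is perfectly everywhere surjective if $f(P)=\mathbb C$ for every perfect subset $P\subset\mathbb C$. $\mathbb C^{\mathbb C}$ is the commutative algebra of all functions $\mathbb C\to\mathbb C$ with pointwise operations. A subset $E$ of a commutative algebra $B$ is strongly $\kappa$-algebrable if there exists a set $X=\{x_\alpha:\alpha<\kappa\}\subset B$ of distinct elements such that the set of all monomials $x_{\alpha_1}^{k_1}\cdots x_{\alpha_n}^{k_n}$ ($n\ge1$, distinct $\alpha_i$, $k_i\ge1$) is linearly independent and every nontrivial linear combination of such monomials belongs to $E$ (i.e. $X$ freely generates an algebra contained in $E\cup\{0\}$). *)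

theory Defs
  imports "HOL-Analysis.Analysis"
begin

definition perfect_subset :: "complex set \<Rightarrow> bool" where
  "perfect_subset P \<longleftrightarrow> P \<noteq> {} \<and> closed P \<and> (\<forall>x\<in>P. x islimpt P)"

definition PES :: "(complex \<Rightarrow> complex) set" where
  "PES = {f. \<forall>P. perfect_subset P \<longrightarrow> f ` P = UNIV}"

text \<open>Exponent vectors of monomials: finitely supported, not identically zero
  (so a monomial is x_{a1}^{k1} ... x_{an}^{kn} with n >= 1, distinct a_i, k_i >= 1).\<close>
definition monomial_exps :: "('i \<Rightarrow> nat) set" where
  "monomial_exps = {e. finite {i. e i \<noteq> 0} \<and> (\<exists>i. e i \<noteq> 0)}"

definition monomial_fun :: "('i \<Rightarrow> complex \<Rightarrow> complex) \<Rightarrow> ('i \<Rightarrow> nat) \<Rightarrow> complex \<Rightarrow> complex" where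
  "monomial_fun x e = (\<lambda>z. \<Prod>i\<in>{i. e i \<noteq> 0}. x i z ^ e i)"

text \<open>Strong kappa-algebrability of E in C^C, with kappa given as the cardinality of
  the index set I: distinct generators x_i (i in I) whose monomials are linearly
  independent and all of whose nontrivial linear combinations of monomials lie in E.\<close>
definition strongly_algebrable_on :: "'i set \<Rightarrow> (complex \<Rightarrow> complex) set \<Rightarrow> bool" where
  "strongly_algebrable_on I E \<longleftrightarrow>
     (\<exists>x :: 'i \<Rightarrow> complex \<Rightarrow> complex.
        inj_on x I \<and>
        (\<forall>M c. finite M \<longrightarrow> M \<subseteq> monomial_exps \<longrightarrow> (\<forall>e\<in>M. {i. e i \<noteq> 0} \<subseteq> I) \<longrightarrow>
               (\<exists>e\<in>M. c e \<noteq> (0::complex)) \<longrightarrow>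
               (let f = (\<lambda>z. \<Sum>e\<in>M. c e * monomial_fun x e z)
                in f \<noteq> (\<lambda>z. 0) \<and> f \<in> E)))"

end

theory Submission
  imports Defs "HOL-Library.Equipollence" "HOL-Computational_Algebra.Fundamental_Theorem_Algebra"
begin
unbundle cardinal_syntax



lemma sdr_complex:
  fixes T :: "complex \<Rightarrow> complex set"
  assumes T: "\<And>j. (UNIV::complex set) \<lesssim> T j"
  shows "\<exists>g. inj g \<and> (\<forall>j. g j \<in> T j)"
proof -
  define r where "r = |UNIV::complex set|"
  have Cr: "Card_order r" unfolding r_def by (rule card_of_Card_order)
  have Fr: "Field r = UNIV" unfolding r_def by (rule Field_card_of)
  have Wr: "Well_order r" unfolding r_def by (rule card_of_Well_order)
  have wf: "wf (r - Id)" using Wr wo_rel.WF wo_rel_def by blast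
  define F where "F = (\<lambda>(g::complex \<Rightarrow> complex) j. SOME z. z \<in> T j \<and> z \<notin> g ` underS r j)"
  define g where "g = wfrec (r - Id) F"
  have cut_eq: "cut g (r - Id) j ` underS r j = g ` underS r j" for j
    unfolding cut_def underS_def by auto
  have geq: "g j = (SOME z. z \<in> T j \<and> z \<notin> g ` underS r j)" for j
  proof -
    have "g j = F (cut g (r - Id) j) j" unfolding g_def by (rule wfrec[OF wf])
    also have "\<dots> = (SOME z. z \<in> T j \<and> z \<notin> g ` underS r j)"
      unfolding F_def by (simp add: cut_eq)
    finally show ?thesis .
  qed
  have ex: "\<exists>z. z \<in> T j \<and> z \<notin> g ` underS r j" for j
  proof (rule ccontr)
    assume "\<not> ?thesis"
    hence sub: "T j \<subseteq> g ` underS r j" by blast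
    have "|T j| \<le>o |g ` underS r j|" using sub by (rule card_of_mono1)
    also have "|g ` underS r j| \<le>o |underS r j|" by (rule card_of_image)
    also have "|underS r j| <o r" using card_of_underS[OF Cr] Fr by simp
    finally have "|T j| <o |UNIV::complex set|" unfolding r_def .
    moreover have "|UNIV::complex set| \<le>o |T j|"
      using T[of j] unfolding lepoll_def card_of_ordLeq[symmetric] by blast
    ultimately show False using not_ordLess_ordLeq by blast
  qed
  have gT: "g j \<in> T j \<and> g j \<notin> g ` underS r j" for j
    using someI_ex[OF ex[of j]] geq[of j] by simp
  have "inj g"
  proof (rule injI, rule ccontr)
    fix a b assume eq: "g a = g b" and ne: "a \<noteq> b"
    have "(a,b) \<in> r \<or> (b,a) \<in> r" using Wr Fr
      by (metis UNIV_I wo_rel.TOTALS wo_rel_def)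
    thus False
    proof
      assume "(a,b) \<in> r" hence "a \<in> underS r b" using ne by (simp add: underS_def)
      thus False using gT[of b] eq by (metis imageI)
    next
      assume "(b,a) \<in> r" hence "b \<in> underS r a" using ne by (simp add: underS_def)
      thus False using gT[of a] eq by (metis imageI)
    qed
  qed
  thus ?thesis using gT by blast
qed




definition Enc :: "(nat \<Rightarrow> nat set) \<Rightarrow> nat set" where
  "Enc F = {m. case prod_decode m of (j,n) \<Rightarrow> n \<in> F j}"

lemma Enc_inj: "Enc F = Enc G \<Longrightarrow> F = G"
proof
  fix j assume e: "Enc F = Enc G"
  have "F j = {n. prod_encode (j,n) \<in> Enc F}" for F by (simp add: Enc_def)
  thus "F j = G j" using e by metis
qed

lemma Enc_eq: "Enc F = Enc G \<longleftrightarrow> F = G" using Enc_inj by blast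

lemma real_natset: "\<exists>h::real \<Rightarrow> nat set. inj h"
  using nat_sets_eqpoll_reals eqpoll_sym eqpoll_imp_lepoll unfolding lepoll_def by blast

definition r2n :: "real \<Rightarrow> nat set" where "r2n = (SOME h. inj h)"
lemma inj_r2n: "inj r2n" unfolding r2n_def using real_natset by (rule someI_ex)

definition encC :: "complex \<Rightarrow> nat set" where
  "encC z = Enc (\<lambda>j::nat. if j = 0 then r2n (Re z) else r2n (Im z))"

lemma inj_encC: "inj encC"
proof (rule injI)
  fix a b assume "encC a = encC b"
  hence "(\<lambda>j::nat. if j = 0 then r2n (Re a) else r2n (Im a)) = (\<lambda>j::nat. if j = 0 then r2n (Re b) else r2n (Im b))"
    unfolding encC_def by (simp only: Enc_eq)
  hence "r2n (Re a) = r2n (Re b)" "r2n (Im a) = r2n (Im b)" by (metis one_neq_zero)+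
  thus "a = b" using inj_r2n by (simp add: inj_eq complex_eq_iff)
qed

definition encL :: "complex list \<Rightarrow> nat set" where
  "encL xs = Enc (\<lambda>j::nat. if j = 0 then {length xs} else if j - 1 < length xs then encC (xs ! (j - 1)) else {})"

lemma inj_encL: "inj encL"
proof (rule injI)
  fix a b assume "encL a = encL b"
  hence e: "(\<lambda>j::nat. if j = 0 then {length a} else if j - 1 < length a then encC (a ! (j - 1)) else {})
      = (\<lambda>j::nat. if j = 0 then {length b} else if j - 1 < length b then encC (b ! (j - 1)) else {})"
    unfolding encL_def by (simp only: Enc_eq)
  from fun_cong[OF e, of 0] have len: "length a = length b" by simp
  have "a ! i = b ! i" if "i < length a" for i
    using fun_cong[OF e, of "Suc i"] that len inj_encC by (simp add: inj_eq)
  thus "a = b" using len by (simp add: list_eq_iff_nth_eq)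
qed

type_synonym data = "complex list \<times> complex \<times> nat"

definition encD :: "data \<Rightarrow> nat set" where
  "encD d = Enc (\<lambda>j::nat. if j = 0 then encL (fst d) else if j = 1 then encC (fst (snd d)) else {snd (snd d)})"

lemma inj_encD: "inj encD"
proof (rule injI)
  fix a b assume "encD a = encD b"
  hence e: "(\<lambda>j::nat. if j = 0 then encL (fst a) else if j = 1 then encC (fst (snd a)) else {snd (snd a)})
    = (\<lambda>j::nat. if j = 0 then encL (fst b) else if j = 1 then encC (fst (snd b)) else {snd (snd b)})"
    unfolding encD_def by (simp only: Enc_eq)
  from fun_cong[OF e, of 0] fun_cong[OF e, of 1] fun_cong[OF e, of 2]
  show "a = b" using inj_encL inj_encC by (simp add: inj_eq prod_eq_iff)
qed

lemma closed_natset: "\<exists>h::complex set \<Rightarrow> nat set. inj_on h {Q. closed Q}"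
proof -
  obtain Bs :: "complex set set" where cB: "countable Bs" and oB: "\<And>C. C\<in>Bs \<Longrightarrow> open C"
    and bB: "\<And>S. open S \<Longrightarrow> \<exists>U. U \<subseteq> Bs \<and> S = \<Union>U"
    using univ_second_countable[where 'a=complex] by metis
  have "Bs \<noteq> {}"
  proof
    assume "Bs = {}"
    obtain U where "U \<subseteq> Bs" "(UNIV::complex set) = \<Union>U" using bB[of UNIV] by auto
    thus False using \<open>Bs = {}\<close> by auto
  qed
  hence rB: "range (from_nat_into Bs) = Bs" using cB by (simp add: range_from_nat_into)
  define h where "h Q = {n. from_nat_into Bs n \<inter> Q = {}}" for Q
  have key: "Q = - \<Union>{b\<in>Bs. b \<inter> Q = {}}" if cQ: "closed Q" for Q
  proof -
    obtain U where U: "U \<subseteq> Bs" "- Q = \<Union>U" using bB[OF open_Compl[OF cQ]] by blast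
    show ?thesis
    proof (rule set_eqI)
      fix x show "x \<in> Q \<longleftrightarrow> x \<in> - \<Union>{b\<in>Bs. b \<inter> Q = {}}"
      proof
        assume "x \<in> Q" thus "x \<in> - \<Union>{b\<in>Bs. b \<inter> Q = {}}" by blast
      next
        assume x: "x \<in> - \<Union>{b\<in>Bs. b \<inter> Q = {}}"
        show "x \<in> Q"
        proof (rule ccontr)
          assume "x \<notin> Q"
          then obtain b where "b \<in> U" "x \<in> b" using U(2) by blast
          moreover have "b \<inter> Q = {}" using U(2) \<open>b \<in> U\<close> by blast
          ultimately show False using x U(1) by blast
        qed
      qed
    qed
  qed
  have key2: "{b\<in>Bs. b \<inter> Q = {}} = from_nat_into Bs ` h Q" for Q
  proof
    show "{b\<in>Bs. b \<inter> Q = {}} \<subseteq> from_nat_into Bs ` h Q"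
    proof
      fix b assume b: "b \<in> {b\<in>Bs. b \<inter> Q = {}}"
      then obtain n where "b = from_nat_into Bs n" using rB by blast
      thus "b \<in> from_nat_into Bs ` h Q" using b unfolding h_def by blast
    qed
  qed (use rB in \<open>auto simp: h_def\<close>)
  have "inj_on h {Q. closed Q}"
  proof (rule inj_onI)
    fix Q Q' assume "Q \<in> {Q. closed Q}" "Q' \<in> {Q. closed Q}" "h Q = h Q'"
    hence "closed Q" "closed Q'" "{b\<in>Bs. b \<inter> Q = {}} = {b\<in>Bs. b \<inter> Q' = {}}"
      using key2[of Q] key2[of Q'] by simp_all
    thus "Q = Q'" using key[of Q] key[of Q'] by simp
  qed
  thus ?thesis by blast
qed

definition encQ :: "complex set \<Rightarrow> nat set" where
  "encQ = (SOME h. inj_on h {Q. closed Q})"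
lemma inj_encQ: "inj_on encQ {Q. closed Q}"
  unfolding encQ_def using closed_natset by (rule someI_ex)

lemma index_lepoll: "({Q::complex set. closed Q} \<times> (UNIV :: data set)) \<lesssim> (UNIV::complex set)"
proof -
  define e where "e x = Enc (\<lambda>j::nat. if j = 0 then encQ (fst x) else encD (snd x))" for x :: "complex set \<times> data"
  have "inj_on e ({Q. closed Q} \<times> UNIV)"
  proof (rule inj_onI)
    fix a b assume a: "a \<in> {Q. closed Q} \<times> (UNIV :: data set)" and b: "b \<in> {Q. closed Q} \<times> (UNIV :: data set)"
      and "e a = e b"
    hence E: "(\<lambda>j::nat. if j = 0 then encQ (fst a) else encD (snd a)) = (\<lambda>j::nat. if j = 0 then encQ (fst b) else encD (snd b))"
      unfolding e_def by (simp only: Enc_eq)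
    from fun_cong[OF E, of 0] fun_cong[OF E, of 1] have "encQ (fst a) = encQ (fst b)" "encD (snd a) = encD (snd b)" by simp_all
    moreover have "closed (fst a)" "closed (fst b)" using a b by auto
    ultimately have "fst a = fst b" "snd a = snd b"
      using inj_onD[OF inj_encQ] injD[OF inj_encD] by (metis mem_Collect_eq)+
    thus "a = b" by (simp add: prod_eq_iff)
  qed
  hence "({Q::complex set. closed Q} \<times> (UNIV :: data set)) \<lesssim> (UNIV :: nat set set)" unfolding lepoll_def
    by (intro exI[of _ e] conjI) simp_all
  also have "(UNIV :: nat set set) \<lesssim> (UNIV :: real set)"
    using nat_sets_eqpoll_reals eqpoll_imp_lepoll by blast
  also have "(UNIV :: real set) \<lesssim> (UNIV :: complex set)"
    unfolding lepoll_def by (intro exI[of _ complex_of_real] conjI) (simp_all add: inj_on_def)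
  finally show ?thesis .
qed

lemma perfect_lepoll:
  assumes "perfect_subset P" shows "(UNIV::complex set) \<lesssim> P"
proof -
  have "(UNIV::complex set) \<lesssim> (UNIV :: nat set set)" using inj_encC unfolding lepoll_def by blast
  also have "(UNIV :: nat set set) \<lesssim> (UNIV :: real set)"
    using nat_sets_eqpoll_reals eqpoll_imp_lepoll by blast
  also have "(UNIV :: real set) \<lesssim> P"
  proof (rule lepoll_perfect_set[of euclidean])
    show "completely_metrizable_space (euclidean :: complex topology) \<or> locally_compact_space (euclidean :: complex topology) \<and> Hausdorff_space (euclidean :: complex topology)"
      using completely_metrizable_space_euclidean by blast
    have "euclidean derived_set_of P = {x. x islimpt P}"
      by (auto simp: derived_set_of_def islimpt_def)
    also have "\<dots> = P" using assms unfolding perfect_subset_def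
      using closed_limpt by blast
    finally show "euclidean derived_set_of P = P" .
    show "P \<noteq> {}" using assms unfolding perfect_subset_def by blast
  qed
  finally show ?thesis .
qed




lemma sdr_gen:
  fixes T :: "'i \<Rightarrow> complex set" and I :: "'i set"
  assumes I: "I \<lesssim> (UNIV::complex set)" and T: "\<And>i. i \<in> I \<Longrightarrow> (UNIV::complex set) \<lesssim> T i"
  shows "\<exists>g. inj_on g I \<and> (\<forall>i\<in>I. g i \<in> T i)"
proof -
  obtain h :: "'i \<Rightarrow> complex" where h: "inj_on h I" using I unfolding lepoll_def by blast
  define T' where "T' j = (if j \<in> h ` I then T (inv_into I h j) else UNIV)" for j
  have "(UNIV::complex set) \<lesssim> T' j" for j
    unfolding T'_def using T h by auto
  then obtain g' where g': "inj g'" "\<forall>j. g' j \<in> T' j" using sdr_complex by blast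
  have "inj_on (g' \<circ> h) I" using h g'(1) by (simp add: comp_inj_on inj_on_subset)
  moreover have "\<forall>i\<in>I. (g' \<circ> h) i \<in> T i"
  proof
    fix i assume "i \<in> I"
    hence "T' (h i) = T i" unfolding T'_def using h by simp
    thus "(g' \<circ> h) i \<in> T i" using g'(2) by (metis comp_apply)
  qed
  ultimately show ?thesis by blast
qed

lemma D_exists: "\<exists>D :: complex \<Rightarrow> data. \<forall>P d. perfect_subset P \<longrightarrow> (\<exists>z\<in>P. D z = d)"
proof -
  define I where "I = {Q::complex set. closed Q} \<times> (UNIV :: data set)"
  define T where "T i = (if perfect_subset (fst i) then fst i else UNIV)" for i :: "complex set \<times> data"
  have "\<exists>g. inj_on g I \<and> (\<forall>i\<in>I. g i \<in> T i)"
  proof (rule sdr_gen)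
    show "I \<lesssim> (UNIV::complex set)" unfolding I_def by (rule index_lepoll)
    show "(UNIV::complex set) \<lesssim> T i" if "i \<in> I" for i
      unfolding T_def using perfect_lepoll by auto
  qed
  then obtain g where g: "inj_on g I" "\<forall>i\<in>I. g i \<in> T i" by blast
  define D where "D z = snd (inv_into I g z)" for z
  have "\<exists>z\<in>P. D z = d" if P: "perfect_subset P" for P d
  proof
    have "(P, d) \<in> I" using P unfolding I_def perfect_subset_def by auto
    thus "g (P,d) \<in> P" using g(2) P unfolding T_def by fastforce
    show "D (g (P,d)) = d" unfolding D_def using g(1) \<open>(P, d) \<in> I\<close> by simp
  qed
  thus ?thesis by blast
qed




fun bcode :: "bool list \<Rightarrow> nat" where
  "bcode [] = 0"
| "bcode (b # bs) = (if b then 1 else 0) + 2 * bcode bs"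

lemma bcode_inj: "length a = length b \<Longrightarrow> bcode a = bcode b \<Longrightarrow> a = b"
proof (induction a arbitrary: b)
  case Nil thus ?case by simp
next
  case (Cons x xs)
  then obtain y ys where b: "b = y # ys" by (cases b) auto
  from Cons.prems b have e: "(if x then 1 else 0) + 2 * bcode xs = (if y then 1 else (0::nat)) + 2 * bcode ys" by simp
  hence "x = y" by (cases x; cases y) presburger+
  with e have "bcode xs = bcode ys" by simp
  thus ?case using Cons.IH Cons.prems b \<open>x = y\<close> by simp
qed

lemma digits_unique:
  fixes B :: nat
  assumes "\<forall>k<N. a k < B" "\<forall>k<N. b k < B" "(\<Sum>k<N. a k * B ^ k) = (\<Sum>k<N. b k * B ^ k)"
  shows "\<forall>k<N. a k = b k"
  using assms
proof (induction N arbitrary: a b)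
  case 0 thus ?case by simp
next
  case (Suc N)
  have sa: "(\<Sum>k<Suc N. a k * B ^ k) = a 0 + B * (\<Sum>k<N. a (Suc k) * B ^ k)" for a
    by (subst sum.lessThan_Suc_shift) (simp add: sum_distrib_left mult_ac)
  have B: "B > 0" using Suc.prems(1) by auto
  have a0: "a 0 < B" "b 0 < B" using Suc.prems by auto
  have e: "a 0 + B * (\<Sum>k<N. a (Suc k) * B ^ k) = b 0 + B * (\<Sum>k<N. b (Suc k) * B ^ k)"
    using Suc.prems(3) sa[of a] sa[of b] by simp
  have h0: "a 0 = b 0"
    using arg_cong[OF e, of "\<lambda>x. x mod B"] a0 by simp
  have hr: "(\<Sum>k<N. a (Suc k) * B ^ k) = (\<Sum>k<N. b (Suc k) * B ^ k)"
    using e h0 B by simp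
  have "\<forall>k<N. a (Suc k) = b (Suc k)"
    using Suc.IH[of "\<lambda>k. a (Suc k)" "\<lambda>k. b (Suc k)"] Suc.prems hr by simp
  thus ?case using h0 by (metis less_Suc_eq_0_disj)
qed

lemma digits_unique_set:
  fixes B :: nat and cd :: "'x \<Rightarrow> nat"
  assumes S: "finite S" and inj: "inj_on cd S"
    and ab: "\<forall>A\<in>S. a A < B" "\<forall>A\<in>S. b A < B"
    and eq: "(\<Sum>A\<in>S. a A * B ^ cd A) = (\<Sum>A\<in>S. b A * B ^ cd A)" and B0: "B > 0"
  shows "\<forall>A\<in>S. a A = b A"
proof -
  define N where "N = Suc (Max (insert 0 (cd ` S)))"
  have cdN: "cd A < N" if "A \<in> S" for A
    unfolding N_def using S that by (simp add: le_imp_less_Suc)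
  define \<alpha> where "\<alpha> a k = (if k \<in> cd ` S then a (inv_into S cd k) else 0)" for a :: "'x \<Rightarrow> nat" and k
  have conv: "(\<Sum>A\<in>S. a A * B ^ cd A) = (\<Sum>k<N. \<alpha> a k * B ^ k)" for a
  proof -
    have "(\<Sum>A\<in>S. a A * B ^ cd A) = (\<Sum>k\<in>cd ` S. \<alpha> a k * B ^ k)"
      by (subst sum.reindex[OF inj]) (simp add: \<alpha>_def inj)
    also have "\<dots> = (\<Sum>k<N. \<alpha> a k * B ^ k)"
      by (rule sum.mono_neutral_left) (auto simp: \<alpha>_def cdN)
    finally show ?thesis .
  qed
  have lt: "\<forall>k<N. \<alpha> a k < B" "\<forall>k<N. \<alpha> b k < B"
    using ab B0 by (auto simp: \<alpha>_def inv_into_into)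
  have "\<forall>k<N. \<alpha> a k = \<alpha> b k"
    by (rule digits_unique[OF lt]) (use eq conv in metis)
  show ?thesis
  proof
    fix A assume A: "A \<in> S"
    have "\<alpha> a (cd A) = \<alpha> b (cd A)" using \<open>\<forall>k<N. \<alpha> a k = \<alpha> b k\<close> cdN[OF A] by blast
    thus "a A = b A" using A inj by (simp add: \<alpha>_def)
  qed
qed

lemma key_poly:
  fixes M :: "(complex set \<Rightarrow> nat) set" and c :: "(complex set \<Rightarrow> nat) \<Rightarrow> complex"
  assumes M: "finite M" "M \<subseteq> monomial_exps" and e0: "e0 \<in> M" "c e0 \<noteq> 0"
  shows "\<exists>ps s B. (\<Sum>e\<in>M. c e * (\<Prod>A\<in>{A. e A \<noteq> 0}. (s ^ (B ^ bcode (map (\<lambda>p. p \<in> A) ps))) ^ e A)) = w"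
proof -
  have suppfin: "finite {A. e A \<noteq> 0}" if "e \<in> M" for e
    using M that unfolding monomial_exps_def by auto
  define S where "S = (\<Union>e\<in>M. {A. e A \<noteq> 0})"
  have fS: "finite S" using M suppfin unfolding S_def by auto
  define pick where "pick = (\<lambda>(A, A'). SOME p::complex. (p \<in> A) \<noteq> (p \<in> A'))"
  have fP: "finite (pick ` (S \<times> S))" using fS by simp
  obtain ps where ps: "set ps = pick ` (S \<times> S)" using finite_list[OF fP] by blast
  define tr where "tr A = map (\<lambda>p. p \<in> A) ps" for A
  have tr_inj: "inj_on tr S"
  proof (rule inj_onI, rule ccontr)
    fix A A' assume A: "A \<in> S" "A' \<in> S" "tr A = tr A'" "A \<noteq> A'"
    have "\<exists>p. (p \<in> A) \<noteq> (p \<in> A')" using A(4) by blast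
    hence pk: "(pick (A,A') \<in> A) \<noteq> (pick (A,A') \<in> A')" unfolding pick_def
      using someI_ex[where P = "\<lambda>p. (p \<in> A) \<noteq> (p \<in> A')"] by simp
    have "pick (A,A') \<in> set ps" using ps A by auto
    hence "(pick (A,A') \<in> A) = (pick (A,A') \<in> A')"
      using A(3) unfolding tr_def by (simp add: map_eq_conv)
    thus False using pk by simp
  qed
  define cd where "cd A = bcode (tr A)" for A
  have cd_inj: "inj_on cd S"
  proof (rule inj_onI)
    fix A A' assume "A \<in> S" "A' \<in> S" "cd A = cd A'"
    hence "tr A = tr A'" using bcode_inj[of "tr A" "tr A'"] unfolding cd_def by (simp add: tr_def)
    thus "A = A'" using tr_inj \<open>A \<in> S\<close> \<open>A' \<in> S\<close> by (simp add: inj_on_eq_iff)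
  qed
  define B where "B = 2 + (\<Sum>e\<in>M. \<Sum>A\<in>{A. e A \<noteq> 0}. e A)"
  have eB: "e A < B" if e: "e \<in> M" for e A
  proof (cases "e A = 0")
    case True thus ?thesis unfolding B_def by simp
  next
    case False
    have "e A \<le> (\<Sum>A\<in>{A. e A \<noteq> 0}. e A)"
      by (rule member_le_sum) (use False suppfin[OF e] in auto)
    also have "\<dots> \<le> (\<Sum>e\<in>M. \<Sum>A\<in>{A. e A \<noteq> 0}. e A)"
      by (rule member_le_sum[where f = "\<lambda>e. \<Sum>A\<in>{A. e A \<noteq> 0}. e A"]) (use e M in auto)
    finally show ?thesis unfolding B_def by simp
  qed
  have B2: "B \<ge> 2" unfolding B_def by simp
  define K where "K e = (\<Sum>A\<in>{A. e A \<noteq> 0}. e A * B ^ cd A)" for e :: "complex set \<Rightarrow> nat"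
  have KS: "K e = (\<Sum>A\<in>S. e A * B ^ cd A)" if e: "e \<in> M" for e
    unfolding K_def by (rule sum.mono_neutral_left) (use fS e in \<open>auto simp: S_def\<close>)
  have K_inj: "inj_on K M"
  proof (rule inj_onI)
    fix e e' assume e: "e \<in> M" "e' \<in> M" "K e = K e'"
    have "\<forall>A\<in>S. e A = e' A"
      by (rule digits_unique_set[OF fS cd_inj]) (use e eB B2 KS in auto)
    moreover have "e A = 0 \<and> e' A = 0" if "A \<notin> S" for A
      using that e unfolding S_def by auto
    ultimately show "e = e'" by (metis ext)
  qed
  obtain A0 where A0: "e0 A0 \<noteq> 0" using M e0 unfolding monomial_exps_def by auto
  have Kpos: "K e0 > 0"
  proof -
    have "0 < e0 A0 * B ^ cd A0" using A0 B2 by simp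
    also have "\<dots> \<le> K e0" unfolding K_def
      by (rule member_le_sum[where f = "\<lambda>A. e0 A * B ^ cd A"]) (use A0 suppfin[OF e0(1)] in auto)
    finally show ?thesis .
  qed
  have prodK: "(\<Prod>A\<in>{A. e A \<noteq> 0}. (s ^ (B ^ cd A)) ^ e A) = s ^ K e" for e and s :: complex
    by (simp add: K_def power_sum power_mult[symmetric] mult.commute)
  define p where "p = (\<Sum>e\<in>M. monom (c e) (K e)) - [:w:]"
  have "coeff p (K e0) = (\<Sum>e\<in>M. if e = e0 then c e else 0)"
  proof -
    have "coeff p (K e0) = (\<Sum>e\<in>M. if K e = K e0 then c e else 0)"
    proof -
      have "coeff [:w:] (K e0) = 0" using Kpos by (cases "K e0") auto
      thus ?thesis by (simp add: p_def coeff_sum coeff_monom)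
    qed
    also have "\<dots> = (\<Sum>e\<in>M. if e = e0 then c e else 0)"
      by (rule sum.cong) (use K_inj e0 in \<open>auto simp: inj_on_eq_iff\<close>)
    finally show ?thesis .
  qed
  also have "\<dots> = c e0" using M e0 by simp
  finally have "coeff p (K e0) \<noteq> 0" using e0 by simp
  hence "K e0 \<le> degree p" by (rule le_degree)
  hence "degree p \<noteq> 0" using Kpos by simp
  hence "\<not> constant (poly p)" by (simp add: constant_degree)
  then obtain s where "poly p s = 0" using fundamental_theorem_of_algebra by blast
  hence "(\<Sum>e\<in>M. c e * s ^ K e) = w" by (simp add: p_def poly_sum poly_monom)
  moreover have "(\<Sum>e\<in>M. c e * (\<Prod>A\<in>{A. e A \<noteq> 0}. (s ^ (B ^ cd A)) ^ e A)) = (\<Sum>e\<in>M. c e * s ^ K e)"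
    by (rule sum.cong[OF refl]) (simp only: prodK)
  ultimately have "(\<Sum>e\<in>M. c e * (\<Prod>A\<in>{A. e A \<noteq> 0}. (s ^ (B ^ cd A)) ^ e A)) = w" by simp
  thus ?thesis unfolding cd_def tr_def by blast
qed




lemma perfect_UNIV: "perfect_subset (UNIV :: complex set)"
  unfolding perfect_subset_def by (simp add: islimpt_UNIV)

theorem theorem3p5:
  shows "strongly_algebrable_on (UNIV :: complex set set) PES"
proof -
  obtain D :: "complex \<Rightarrow> data" where D: "\<And>P d. perfect_subset P \<Longrightarrow> \<exists>z\<in>P. D z = d"
    using D_exists by blast
  define x where "x A z = (case D z of (ps, s, B) \<Rightarrow> s ^ (B ^ bcode (map (\<lambda>p. p \<in> A) ps)))"
    for A :: "complex set" and z
  have good: "(\<lambda>z. \<Sum>e\<in>M. c e * monomial_fun x e z) \<in> PES \<and> (\<lambda>z. \<Sum>e\<in>M. c e * monomial_fun x e z) \<noteq> (\<lambda>z. 0)"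
    if M: "finite M" "M \<subseteq> monomial_exps" and ex: "\<exists>e\<in>M. c e \<noteq> 0" for M c
  proof -
    obtain e0 where e0: "e0 \<in> M" "c e0 \<noteq> 0" using ex by blast
    have surj: "\<exists>z\<in>P. (\<Sum>e\<in>M. c e * monomial_fun x e z) = w" if P: "perfect_subset P" for P w
    proof -
      obtain ps s B where w: "(\<Sum>e\<in>M. c e * (\<Prod>A\<in>{A. e A \<noteq> 0}. (s ^ (B ^ bcode (map (\<lambda>p. p \<in> A) ps))) ^ e A)) = w"
        using key_poly[of M e0 c w] M e0 by blast
      obtain z where z: "z \<in> P" "D z = (ps, s, B)" using D[OF P] by blast
      have xz: "x A z = s ^ (B ^ bcode (map (\<lambda>p. p \<in> A) ps))" for A
        unfolding x_def z(2) by simp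
      have mf: "monomial_fun x e z = (\<Prod>A\<in>{A. e A \<noteq> 0}. (s ^ (B ^ bcode (map (\<lambda>p. p \<in> A) ps))) ^ e A)" for e
        unfolding monomial_fun_def xz ..
      have "(\<Sum>e\<in>M. c e * monomial_fun x e z) = w"
        unfolding mf by (rule w)
      thus ?thesis using z by blast
    qed
    have "(\<lambda>z. \<Sum>e\<in>M. c e * monomial_fun x e z) \<in> PES"
      unfolding PES_def
    proof (intro CollectI allI impI)
      fix P assume P: "perfect_subset P"
      show "(\<lambda>z. \<Sum>e\<in>M. c e * monomial_fun x e z) ` P = UNIV"
      proof (rule subset_antisym)
        show "UNIV \<subseteq> (\<lambda>z. \<Sum>e\<in>M. c e * monomial_fun x e z) ` P"
        proof
          fix w
          obtain z where zP: "z \<in> P" and zw: "(\<Sum>e\<in>M. c e * monomial_fun x e z) = w" using surj[OF P, of w] by blast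
          show "w \<in> (\<lambda>z. \<Sum>e\<in>M. c e * monomial_fun x e z) ` P" by (rule rev_image_eqI[where f = "\<lambda>z. \<Sum>e\<in>M. c e * monomial_fun x e z", OF zP zw[symmetric]])
        qed
      qed simp
    qed
    moreover have "(\<lambda>z. \<Sum>e\<in>M. c e * monomial_fun x e z) \<noteq> (\<lambda>z. 0)"
    proof
      assume "(\<lambda>z. \<Sum>e\<in>M. c e * monomial_fun x e z) = (\<lambda>z. 0)"
      moreover obtain z where "(\<Sum>e\<in>M. c e * monomial_fun x e z) = 1" using surj[OF perfect_UNIV] by blast
      ultimately have "(0::complex) = 1" by (metis (no_types) fun_cong)
      thus False by simp
    qed
    ultimately show ?thesis by blast
  qed
  have inj: "inj_on x UNIV"
  proof (rule inj_onI, rule ccontr)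
    fix A A' :: "complex set" assume eq: "x A = x A'" and ne: "A \<noteq> A'"
    define eA where "eA = (\<lambda>X::complex set. if X = A then 1 else (0::nat))"
    define eA' where "eA' = (\<lambda>X::complex set. if X = A' then 1 else (0::nat))"
    have "eA A = 1" "eA' A = 0" using ne unfolding eA_def eA'_def by auto
    hence neq: "eA \<noteq> eA'" by auto
    have mem: "eA \<in> monomial_exps" "eA' \<in> monomial_exps"
      unfolding monomial_exps_def eA_def eA'_def by auto
    define c where "c e = (if e = eA then 1 else - 1 :: complex)" for e
    have mfA: "monomial_fun x eA = x A" unfolding monomial_fun_def eA_def
    proof -
      have "{i. (if i = A then 1 else (0::nat)) \<noteq> 0} = {A}" by auto
      thus "(\<lambda>z. \<Prod>i\<in>{i. (if i = A then 1 else (0::nat)) \<noteq> 0}. x i z ^ (if i = A then 1 else 0)) = x A"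
        by simp
    qed
    have mfA': "monomial_fun x eA' = x A'" unfolding monomial_fun_def eA'_def
    proof -
      have "{i. (if i = A' then 1 else (0::nat)) \<noteq> 0} = {A'}" by auto
      thus "(\<lambda>z. \<Prod>i\<in>{i. (if i = A' then 1 else (0::nat)) \<noteq> 0}. x i z ^ (if i = A' then 1 else 0)) = x A'"
        by simp
    qed
    have "(\<lambda>z. \<Sum>e\<in>{eA, eA'}. c e * monomial_fun x e z) \<noteq> (\<lambda>z. 0)"
    proof -
      have fin: "finite {eA, eA'}" by simp
      have sub: "{eA, eA'} \<subseteq> monomial_exps" using mem by simp
      have ex: "\<exists>e\<in>{eA, eA'}. c e \<noteq> 0" unfolding c_def by simp
      show ?thesis by (rule conjunct2[OF good[OF fin sub ex]])
    qed
    moreover have "(\<lambda>z. \<Sum>e\<in>{eA, eA'}. c e * monomial_fun x e z) = (\<lambda>z. 0)"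
      using neq by (simp add: c_def mfA mfA' eq)
    ultimately show False by blast
  qed
  show ?thesis
    unfolding strongly_algebrable_on_def Let_def
  proof (intro exI[of _ x] conjI allI impI)
    show "inj_on x UNIV" by (rule inj)
  next
    fix M :: "(complex set \<Rightarrow> nat) set" and c :: "(complex set \<Rightarrow> nat) \<Rightarrow> complex"
    assume "finite M" "M \<subseteq> monomial_exps" "\<exists>e\<in>M. c e \<noteq> 0"
    note g = good[OF this]
    show "(\<lambda>z. \<Sum>e\<in>M. c e * monomial_fun x e z) \<noteq> (\<lambda>z. 0)" using g by (rule conjunct2)
  next
    fix M :: "(complex set \<Rightarrow> nat) set" and c :: "(complex set \<Rightarrow> nat) \<Rightarrow> complex"
    assume "finite M" "M \<subseteq> monomial_exps" "\<exists>e\<in>M. c e \<noteq> 0"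
    note g = good[OF this]
    show "(\<lambda>z. \<Sum>e\<in>M. c e * monomial_fun x e z) \<in> PES" using g by (rule conjunct1)
  qed
qed


end
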